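(* Let $I$ and $J$ be compositions of $n$ and let $W(I,J)$ be the set of packed words $w$ with $\mathrm{WC}(w)=I$ and $\mathrm{DC}(w)\succeq J$. Then the coefficient $C_I^J(q)$ of $\Psi_I$ in $S^J(q)$ is \[ C_I^J(q)=\sum_{w\in W(I,J)}q^{\mathrm{sinv}(w)}. \]
   Context: Compositions: sequences of positive integers with sum $n$; $\mathrm{Des}(I)$ is the set of partial sums other than $n$; $K\succeq J$ ($K$ coarser than or equal to $J$) iff $\mathrm{Des}(K)\subseteq\mathrm{Des}(J)$. Over $\mathbb K(q)$ ($\mathrm{char}\,\mathbb K=0$): packed words are words with letter set $\{1,\dots,m\}$; $\mathrm{pack}$ replaces the $t$-th smallest letter by $t$. For a packed word $w=w_1\cdots w_n$: $\mathrm{DC}(w)$ is the composition of $n$ with descent set $\{i:w_i>w_{i+1}\}$; $\mathrm{WC}(w)$ is the composition of $n$ whose descent set is the set of positions $p<n$ with $w_p$ not occurring in $w_{p+1}\cdots w_n$; $\mathrm{sinv}(w)=\#\{i<j:w_i>w_j,\ w_j\text{ not occurring in }w_{j+1}\cdots w_n\}$. $\mathbf{WQSym}$ has basis $\mathbf M_u$ with $\mathbf M_{u'}\mathbf M_{u''}=\sum\mathbf M_u$ over packed $u=v\cdot w$ with $\mathrm{pack}(v)=u'$, $\mathrm{pack}(w)=u''$; $\mathbf M_{u'}\star_q\mathbf M_{u''}=\sum q^{\mathrm{sinv}(u)-\mathrm{sinv}(u')-\mathrm{sinv}(u'')}\mathbf M_u$ (associative). $\mathbf{Sym}$ is the quotient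 by the span of $\mathbf M_u-\mathbf M_v$ with $\mathrm{WC}(u)=\mathrm{WC}(v)$, $\zeta$ the quotient map, $\Psi_I=\zeta(\mathbf M_u)$ for $\mathrm{WC}(u)=I$ (a basis). $\tilde S_m=\sum\mathbf M_u$ over nondecreasing packed $u$ of length $m$; for $J=(j_1,\dots,j_l)$, $S^J(q)=\zeta(\tilde S_{j_1}\star_q\cdots\star_q\tilde S_{j_l})$. *)

theory Defs
  imports "HOL-Computational_Algebra.Polynomial" "HOL-Computational_Algebra.Fraction_Field"
begin

(* Words are nat lists; positions are 0-indexed internally (paper position p = index p-1). *)

definition packed :: "nat list \<Rightarrow> bool" where
  "packed w \<longleftrightarrow> (\<exists>m. set w = {1..m})"

definition pack :: "nat list \<Rightarrow> nat list" where
  "pack w = map (\<lambda>x. card {y \<in> set w. y \<le> x}) w"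

definition is_comp :: "nat \<Rightarrow> nat list \<Rightarrow> bool" where
  "is_comp n I \<longleftrightarrow> (\<forall>x\<in>set I. 0 < x) \<and> sum_list I = n"

definition Des :: "nat list \<Rightarrow> nat set" where
  "Des I = {sum_list (take k I) | k. 0 < k \<and> k < length I}"

definition coarser :: "nat list \<Rightarrow> nat list \<Rightarrow> bool" where
  "coarser K J \<longleftrightarrow> Des K \<subseteq> Des J"

definition comp_of :: "nat \<Rightarrow> nat set \<Rightarrow> nat list" where
  "comp_of n D = (if n = 0 then [] else
     (let ds = sorted_list_of_set (D \<inter> {1..<n}) @ [n]
      in map (\<lambda>(a, b). b - a) (zip (0 # ds) ds)))"

definition DC :: "nat list \<Rightarrow> nat list" where
  "DC w = comp_of (length w) {p. 1 \<le> p \<and> p < length w \<and> w ! (p - 1) > w ! p}"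

definition WC :: "nat list \<Rightarrow> nat list" where
  "WC w = comp_of (length w) {p. 1 \<le> p \<and> p < length w \<and> w ! (p - 1) \<notin> set (drop p w)}"

definition sinv :: "nat list \<Rightarrow> nat" where
  "sinv w = card {(i, j). i < j \<and> j < length w \<and> w ! i > w ! j \<and> w ! j \<notin> set (drop (j + 1) w)}"

(* Elements of WQSym are represented by their coefficient functions u \<mapsto> coefficient of M_u
   (supported on packed words). *)
type_synonym 'k wqsym = "nat list \<Rightarrow> 'k"

(* the q-deformed product, bilinear extension of
   M_u' \<star>_q M_u'' = \<Sum> q^(sinv u - sinv u' - sinv u'') M_u  over packed u = v w,
   pack v = u', pack w = u'' *)
definition qstar :: "'k::field \<Rightarrow> 'k wqsym \<Rightarrow> 'k wqsym \<Rightarrow> 'k wqsym" where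
  "qstar q f g u = (if packed u then
     (\<Sum>k\<le>length u. f (pack (take k u)) * g (pack (drop k u)) *
        q powi (int (sinv u) - int (sinv (pack (take k u))) - int (sinv (pack (drop k u)))))
   else 0)"

definition wunit :: "'k::field wqsym" where
  "wunit u = (if u = [] then 1 else 0)"

definition Stilde :: "nat \<Rightarrow> 'k::field wqsym" where
  "Stilde m u = (if packed u \<and> length u = m \<and> sorted u then 1 else 0)"

(* \<tilde>S_j1 \<star>_q ... \<star>_q \<tilde>S_jl  (the product is associative) *)
fun Sprod :: "'k::field \<Rightarrow> nat list \<Rightarrow> 'k wqsym" where
  "Sprod q [] = wunit"
| "Sprod q (j # js) = qstar q (Stilde j) (Sprod q js)"

(* The quotient map \<zeta> : WQSym \<rightarrow> Sym, expressed in the basis \<Psi>: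
   zeta F I = coefficient of \<Psi>_I in \<zeta>(F) = \<Sum> over packed u with WC(u) = I of F(u). *)
definition zeta :: "'k::field wqsym \<Rightarrow> nat list \<Rightarrow> 'k" where
  "zeta F I = (\<Sum>u \<in> {u. packed u \<and> WC u = I}. F u)"

definition qvar :: "'a::field poly fract" where
  "qvar = Fract [:0, 1:] 1"

(* C_I^J(q): coefficient of \<Psi>_I in S^J(q) = \<zeta>(\<tilde>S_j1 \<star>_q ... \<star>_q \<tilde>S_jl) *)
definition CIJ :: "nat list \<Rightarrow> nat list \<Rightarrow> 'a::field_char_0 poly fract" where
  "CIJ I J = zeta (Sprod qvar J) I"

definition Wset :: "nat list \<Rightarrow> nat list \<Rightarrow> nat list set" where
  "Wset I J = {w. packed w \<and> WC w = I \<and> coarser (DC w) J}"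

end

theory Submission
  imports Defs
begin


definition diffs :: "nat \<Rightarrow> nat list \<Rightarrow> nat list" where
  "diffs a ds = map (\<lambda>(a, b). b - a) (zip (a # ds) ds)"

lemma diffs_take:
  "sorted (a # ds) \<Longrightarrow> k \<le> length ds \<Longrightarrow> sum_list (take k (diffs a ds)) = (a # ds) ! k - a"
proof (induction ds arbitrary: a k)
  case Nil then show ?case by (simp add: diffs_def)
next
  case (Cons d ds)
  show ?case
  proof (cases k)
    case 0 then show ?thesis by (simp add: diffs_def)
  next
    case (Suc k')
    have s: "sorted (d # ds)" "a \<le> d" using Cons.prems by auto
    have IH: "sum_list (take k' (diffs d ds)) = (d # ds) ! k' - d"
      using Cons.IH[OF s(1)] Cons.prems Suc by auto
    have ge: "(d # ds) ! k' \<ge> d"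
    proof -
      have "k' < length (d # ds)" using Cons.prems Suc by simp
      then have "(d # ds) ! k' \<in> set (d # ds)" by (rule nth_mem)
      then show ?thesis using s(1) by auto
    qed
    have "diffs a (d # ds) = (d - a) # diffs d ds" by (simp add: diffs_def)
    then show ?thesis using Suc IH ge s(2) by simp
  qed
qed

lemma diffs_length: "length (diffs a ds) = length ds" by (simp add: diffs_def)

lemma comp_of_eq: "0 < m \<Longrightarrow> comp_of m D = diffs 0 (sorted_list_of_set (D \<inter> {1..<m}) @ [m])"
  by (simp add: comp_of_def diffs_def Let_def)

lemma sorted_ds: "sorted (0 # sorted_list_of_set (D \<inter> {1..<m}) @ [m::nat])"
proof -
  let ?s = "sorted_list_of_set (D \<inter> {1..<(m::nat)})"
  have "set ?s \<subseteq> {1..<m}" by auto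
  then show ?thesis by (auto simp: sorted_append)
qed

lemma sum_comp_of: "sum_list (comp_of m D) = m"
proof (cases "m = 0")
  case True then show ?thesis by (simp add: comp_of_def)
next
  case False
  let ?ds = "sorted_list_of_set (D \<inter> {1..<(m::nat)}) @ [m]"
  have "sum_list (comp_of m D) = sum_list (take (length ?ds) (diffs 0 ?ds))"
    using False by (simp add: comp_of_eq diffs_length)
  also have "\<dots> = (0 # ?ds) ! length ?ds - 0"
    using diffs_take[OF sorted_ds] by blast
  also have "\<dots> = m" by (simp add: nth_append)
  finally show ?thesis .
qed

lemma Des_comp_of: "Des (comp_of m D) = D \<inter> {1..<m}"
proof (cases "m = 0")
  case True then show ?thesis by (simp add: comp_of_def Des_def)
next
  case False
  let ?s = "sorted_list_of_set (D \<inter> {1..<m})"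
  let ?ds = "?s @ [m]"
  have E: "\<And>k. k < length ?ds \<Longrightarrow> sum_list (take k (comp_of m D)) = (0 # ?ds) ! k"
    using False diffs_take[OF sorted_ds, of _ D m] by (simp add: comp_of_eq)
  have lc: "length (comp_of m D) = length ?ds" using False by (simp add: comp_of_eq diffs_length)
  have F: "\<And>k. 0 < k \<Longrightarrow> k < length ?ds \<Longrightarrow> (0 # ?ds) ! k = ?s ! (k - 1)"
  proof -
    fix k :: nat assume k: "0 < k" "k < length ?ds"
    have a: "(0 # ?ds) ! k = ?ds ! (k - 1)" using k by (simp add: nth_Cons')
    have kl: "k - 1 < length ?s" using k by simp
    have b: "?ds ! (k - 1) = ?s ! (k - 1)" using kl by (rule nth_append_left)
    show "(0 # ?ds) ! k = ?s ! (k - 1)" using a b by simp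
  qed
  have "Des (comp_of m D) = set ?s"
  proof (intro set_eqI iffI)
    fix x assume "x \<in> Des (comp_of m D)"
    then obtain k where k: "x = sum_list (take k (comp_of m D))" "0 < k" "k < length (comp_of m D)"
      unfolding Des_def by blast
    then have "x = ?s ! (k - 1)" using E F lc by simp
    moreover have "k - 1 < length ?s" using k lc by simp
    ultimately show "x \<in> set ?s" by (metis nth_mem)
  next
    fix x assume "x \<in> set ?s"
    then obtain i where i: "i < length ?s" "x = ?s ! i" by (metis in_set_conv_nth)
    have "sum_list (take (Suc i) (comp_of m D)) = x" using E[of "Suc i"] F[of "Suc i"] i by simp
    moreover have "Suc i < length (comp_of m D)" using lc i by simp
    ultimately show "x \<in> Des (comp_of m D)" unfolding Des_def by blast
  qed
  also have "\<dots> = D \<inter> {1..<m}" by simp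
  finally show ?thesis .
qed



definition desc :: "nat list \<Rightarrow> nat set" where
  "desc w = {p. 1 \<le> p \<and> p < length w \<and> w ! (p - 1) > w ! p}"

definition packf :: "nat list \<Rightarrow> nat \<Rightarrow> nat" where
  "packf w x = card {y \<in> set w. y \<le> x}"

lemma pack_map: "pack w = map (packf w) w" by (simp add: pack_def packf_def)

lemma packf_mono: "strict_mono_on (set w) (packf w)"
proof (rule strict_mono_onI)
  fix r s assume rs: "r \<in> set w" "s \<in> set w" "r < s"
  have "s \<notin> {y \<in> set w. y \<le> r}" using rs by auto
  moreover have "s \<in> {y \<in> set w. y \<le> s}" using rs by auto
  moreover have "{y \<in> set w. y \<le> r} \<subseteq> {y \<in> set w. y \<le> s}" using rs by auto
  ultimately have ps: "{y \<in> set w. y \<le> r} \<subset> {y \<in> set w. y \<le> s}" by blast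
  then show "packf w r < packf w s" unfolding packf_def using psubset_card_mono[OF _ ps] by simp
qed

lemma packed_pack: "packed (pack w)"
proof -
  let ?S = "set w"
  have sub: "packf w ` ?S \<subseteq> {1..card ?S}"
  proof
    fix z assume "z \<in> packf w ` ?S"
    then obtain x where x: "x \<in> ?S" "z = packf w x" by auto
    have "{y \<in> ?S. y \<le> x} \<noteq> {}" using x by auto
    then have "z \<ge> 1" using x unfolding packf_def by (simp add: Suc_le_eq card_gt_0_iff)
    moreover have "z \<le> card ?S" using x unfolding packf_def by (metis (no_types, lifting) card_mono finite_set mem_Collect_eq subsetI)
    ultimately show "z \<in> {1..card ?S}" by simp
  qed
  have "card (packf w ` ?S) = card ?S"
    using strict_mono_on_imp_inj_on[OF packf_mono] by (rule card_image)
  then have "packf w ` ?S = {1..card ?S}" using sub by (intro card_subset_eq) auto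
  then show ?thesis unfolding packed_def pack_map by auto
qed

lemma desc_map: assumes "strict_mono_on (set w) f" shows "desc (map f w) = desc w"
proof -
  have "\<And>p. 1 \<le> p \<Longrightarrow> p < length w \<Longrightarrow> (f (w ! (p - 1)) > f (w ! p)) = (w ! (p - 1) > w ! p)"
    by (rule strict_mono_on_less[OF assms]) auto
  then show ?thesis unfolding desc_def by auto
qed

lemma desc_pack: "desc (pack w) = desc w"
  unfolding pack_map by (rule desc_map[OF packf_mono])

lemma length_pack: "length (pack w) = length w" by (simp add: pack_def)

lemma sorted_desc: "sorted w \<longleftrightarrow> desc w = {}"
proof
  assume s: "sorted w"
  show "desc w = {}"
  proof (rule ccontr)
    assume "desc w \<noteq> {}"
    then obtain p where p: "1 \<le> p" "p < length w" "w ! (p - 1) > w ! p" unfolding desc_def by auto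
    have "w ! (p - 1) \<le> w ! p" using sorted_nth_mono[OF s, of "p - 1" p] p by simp
    then show False using p by simp
  qed
next
  assume d: "desc w = {}"
  show "sorted w" unfolding sorted_iff_nth_Suc
  proof (intro allI impI)
    fix i assume "Suc i < length w"
    then have "Suc i \<notin> desc w" using d by auto
    then show "w ! i \<le> w ! Suc i" using \<open>Suc i < length w\<close> unfolding desc_def by auto
  qed
qed

lemma sinv_sorted: assumes "sorted w" shows "sinv w = 0"
proof -
  have h: "{(i, j). i < j \<and> j < length w \<and> w ! i > w ! j \<and> w ! j \<notin> set (drop (j + 1) w)} = {}"
    using sorted_nth_mono[OF assms] by (auto simp: not_less less_imp_le)
  show ?thesis unfolding sinv_def h by simp
qed

lemma desc_take: "desc (take j u) = desc u \<inter> {..<j}"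
  unfolding desc_def by auto

lemma desc_drop: "p \<in> desc (drop j u) \<longleftrightarrow> 1 \<le> p \<and> j + p \<in> desc u"
proof (cases "j \<le> length u")
  case True
  show ?thesis
  proof
    assume "p \<in> desc (drop j u)" then show "1 \<le> p \<and> j + p \<in> desc u"
      using True unfolding desc_def by (auto simp: nth_drop add_diff_assoc)
  next
    assume "1 \<le> p \<and> j + p \<in> desc u" then show "p \<in> desc (drop j u)"
      using True unfolding desc_def by (auto simp: nth_drop add_diff_assoc)
  qed
next
  case False then show ?thesis unfolding desc_def by auto
qed

lemma Des_Cons: "Des (j # js) = (if js = [] then {} else insert j ((+) j ` Des js))"
proof (cases "js = []")
  case True then show ?thesis by (simp add: Des_def)
next
  case False
  have "Des (j # js) = insert j ((+) j ` Des js)"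
  proof (intro set_eqI iffI)
    fix x assume "x \<in> Des (j # js)"
    then obtain k where k: "x = sum_list (take k (j # js))" "0 < k" "k < Suc (length js)"
      unfolding Des_def by auto
    then obtain k' where k': "k = Suc k'" by (cases k) auto
    show "x \<in> insert j ((+) j ` Des js)"
    proof (cases "k' = 0")
      case True then show ?thesis using k k' by simp
    next
      case False
      have "sum_list (take k' js) \<in> Des js" unfolding Des_def using False k k' by auto
      then show ?thesis using k k' by simp
    qed
  next
    fix x assume x: "x \<in> insert j ((+) j ` Des js)"
    show "x \<in> Des (j # js)"
    proof (cases "x = j")
      case True
      have "j = sum_list (take 1 (j # js))" by simp
      moreover have "1 < length (j # js)" using False by (cases js) auto
      ultimately show ?thesis unfolding Des_def using True by blast
    next
      case xF: False
      then obtain k where k: "x = j + sum_list (take k js)" "0 < k" "k < length js"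
        using x unfolding Des_def by auto
      have "x = sum_list (take (Suc k) (j # js))" using k by simp
      moreover have "0 < Suc k \<and> Suc k < length (j # js)" using k by simp
      ultimately show ?thesis unfolding Des_def by blast
    qed
  qed
  then show ?thesis using False by simp
qed

lemma L2:
  assumes len: "length u = j + sum_list js"
  shows "(desc (take j u) = {} \<and> desc (drop j u) \<subseteq> Des js) \<longleftrightarrow> desc u \<subseteq> Des (j # js)"
proof (cases "js = []")
  case True
  then have "take j u = u" "drop j u = []" using len by auto
  then show ?thesis using True by (simp add: Des_Cons desc_def)
next
  case False
  have dd: "desc u \<subseteq> {..<length u}" unfolding desc_def by auto
  show ?thesis
  proof
    assume a: "desc (take j u) = {} \<and> desc (drop j u) \<subseteq> Des js"
    show "desc u \<subseteq> Des (j # js)"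
    proof
      fix p assume p: "p \<in> desc u"
      have "p \<ge> j"
      proof (rule ccontr)
        assume "\<not> p \<ge> j"
        then have "p \<in> desc (take j u)" using p by (simp add: desc_take)
        then show False using a by simp
      qed
      show "p \<in> Des (j # js)"
      proof (cases "p = j")
        case True then show ?thesis using False by (simp add: Des_Cons)
      next
        case pF: False
        then have "p - j \<in> desc (drop j u)" using \<open>p \<ge> j\<close> p desc_drop[of "p - j" j u] by simp
        then have "p - j \<in> Des js" using a by auto
        have "p = j + (p - j)" using \<open>p \<ge> j\<close> by simp
        then have "p \<in> (+) j ` Des js" using \<open>p - j \<in> Des js\<close> by (rule image_eqI)
        then show ?thesis using False by (simp add: Des_Cons)
      qed
    qed
  next
    assume a: "desc u \<subseteq> Des (j # js)"
    have DC: "Des (j # js) = insert j ((+) j ` Des js)" using False by (simp add: Des_Cons)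
    have "desc (take j u) = {}"
    proof -
      have "desc u \<inter> {..<j} = {}" using a DC by auto
      then show ?thesis by (simp add: desc_take)
    qed
    moreover have "desc (drop j u) \<subseteq> Des js"
    proof
      fix p assume "p \<in> desc (drop j u)"
      then have "1 \<le> p" "j + p \<in> desc u" using desc_drop by auto
      then have "j + p \<in> insert j ((+) j ` Des js)" using a DC by auto
      then show "p \<in> Des js" using \<open>1 \<le> p\<close> by auto
    qed
    ultimately show "desc (take j u) = {} \<and> desc (drop j u) \<subseteq> Des js" by simp
  qed
qed



lemma packed_Nil: "packed []" unfolding packed_def by (rule exI[of _ 0]) simp

lemma powi_cancel:
  assumes "(q::'k::field) \<noteq> 0"
  shows "q powi (int a - int 0 - int b) * q ^ b = q ^ a"
proof -
  have "q powi (int a - int 0 - int b) = q ^ a / q ^ b"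
    using assms by (simp add: power_int_diff)
  then show ?thesis using assms by simp
qed

lemma Sprod_char:
  assumes q: "(q::'k::field) \<noteq> 0"
  shows "Sprod q J u = (if packed u \<and> length u = sum_list J \<and> desc u \<subseteq> Des J then q ^ sinv u else 0)"
proof (induction J arbitrary: u)
  case Nil
  show ?case by (auto simp: wunit_def packed_Nil desc_def sinv_def Des_def)
next
  case (Cons j js)
  show ?case
  proof (cases "packed u")
    case False then show ?thesis by (simp add: qstar_def)
  next
    case pu: True
    let ?T = "\<lambda>k. Stilde j (pack (take k u)) * Sprod q js (pack (drop k u)) *
        q powi (int (sinv u) - int (sinv (pack (take k u))) - int (sinv (pack (drop k u))))"
    have "Sprod q (j # js) u = (\<Sum>k\<le>length u. ?T k)" using pu by (simp add: qstar_def)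
    also have "\<dots> = (\<Sum>k\<le>length u. if k = j then ?T j else 0)"
    proof (rule sum.cong)
      fix k assume "k \<in> {..length u}"
      then have "length (pack (take k u)) = k" by (simp add: length_pack)
      then show "?T k = (if k = j then ?T j else 0)" by (auto simp: Stilde_def)
    qed simp
    also have "\<dots> = (if j \<le> length u then ?T j else 0)" by (simp add: sum.delta)
    also have "\<dots> = (if packed u \<and> length u = sum_list (j # js) \<and> desc u \<subseteq> Des (j # js) then q ^ sinv u else 0)"
    proof (cases "j \<le> length u")
      case False then show ?thesis by simp
    next
      case jl: True
      have st: "Stilde j (pack (take j u)) = (if desc (take j u) = {} then 1 else (0::'k))"
        using jl by (simp add: Stilde_def packed_pack length_pack sorted_desc desc_pack)
      have ih: "Sprod q js (pack (drop j u)) = (if length u = j + sum_list js \<and> desc (drop j u) \<subseteq> Des js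
           then q ^ sinv (pack (drop j u)) else 0)"
        using Cons.IH[of "pack (drop j u)"] jl by (auto simp: packed_pack length_pack desc_pack)
      show ?thesis
      proof (cases "length u = j + sum_list js")
        case False then show ?thesis using jl ih by simp
      next
        case len: True
        note l2 = L2[OF len]
        show ?thesis
        proof (cases "desc (take j u) = {} \<and> desc (drop j u) \<subseteq> Des js")
          case True
          have s0: "sinv (pack (take j u)) = 0"
            using True by (intro sinv_sorted) (simp add: sorted_desc desc_pack)
          have "?T j = q ^ sinv (pack (drop j u)) *
              q powi (int (sinv u) - int 0 - int (sinv (pack (drop j u))))"
          proof -
            have st1: "Stilde j (pack (take j u)) = (1::'k)" using st True by simp
            have ih1: "Sprod q js (pack (drop j u)) = q ^ sinv (pack (drop j u))" using ih True len by simp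
            show ?thesis by (simp only: st1 ih1 s0 mult_1_left)
          qed
          also have "\<dots> = q ^ sinv u" using powi_cancel[OF q] by (simp add: mult.commute)
          finally show ?thesis using jl True len l2 pu by simp
        next
          case False
          have "?T j = 0"
          proof (cases "desc (take j u) = {}")
            case True
            then have "Sprod q js (pack (drop j u)) = 0" using ih False by simp
            then show ?thesis by simp
          next
            case False
            then have "Stilde j (pack (take j u)) = (0::'k)" using st by simp
            then show ?thesis by simp
          qed
          then show ?thesis using jl False l2 by simp
        qed
      qed
    qed
    finally show ?thesis .
  qed
qed

lemma qvar_nz: "(qvar :: 'a::field poly fract) \<noteq> 0"
proof
  assume "(qvar :: 'a::field poly fract) = 0"
  then have "Fract [:0, 1:] 1 = (Fract 0 1 :: 'a poly fract)" unfolding qvar_def by (simp add: fract_collapse)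
  then have "[:0, 1:] * 1 = (0 :: 'a poly) * 1" by (simp add: eq_fract)
  then show False by simp
qed

lemma len_WC: "sum_list (WC u) = length u" unfolding WC_def by (rule sum_comp_of)

lemma Des_DC: "Des (DC u) = desc u"
proof -
  have "DC u = comp_of (length u) (desc u)" by (simp add: DC_def desc_def)
  then have "Des (DC u) = desc u \<inter> {1..<length u}" by (simp add: Des_comp_of)
  also have "\<dots> = desc u" unfolding desc_def by auto
  finally show ?thesis .
qed

theorem mainTheorem9:
  fixes n :: nat and I J :: "nat list"
  assumes "is_comp n I" and "is_comp n J"
  shows "(CIJ I J :: 'a::field_char_0 poly fract) = (\<Sum>w \<in> Wset I J. qvar ^ sinv w)"
proof -
  define A where "A = {u. packed u \<and> WC u = I}"
  have sI: "sum_list I = n" and sJ: "sum_list J = n" using assms by (auto simp: is_comp_def)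
  have lenA: "\<And>u. u \<in> A \<Longrightarrow> length u = n" using sI len_WC unfolding A_def by auto
  have finA: "finite A"
  proof (rule finite_subset)
    show "A \<subseteq> {xs. set xs \<subseteq> {1..n} \<and> length xs = n}"
    proof
      fix u assume u: "u \<in> A"
      then obtain m where m: "set u = {1..m}" unfolding A_def packed_def by auto
      have "m = card (set u)" using m by simp
      also have "\<dots> \<le> length u" by (rule card_length)
      finally have "set u \<subseteq> {1..n}" using m lenA[OF u] by auto
      then show "u \<in> {xs. set xs \<subseteq> {1..n} \<and> length xs = n}" using lenA[OF u] by simp
    qed
  qed (rule finite_lists_length_eq, simp)
  have "(CIJ I J :: 'a poly fract) = (\<Sum>u\<in>A. Sprod qvar J u)"
    unfolding CIJ_def zeta_def A_def ..
  also have "\<dots> = (\<Sum>u\<in>A. if length u = sum_list J \<and> desc u \<subseteq> Des J then qvar ^ sinv u else 0)"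
    by (rule sum.cong) (auto simp: Sprod_char[OF qvar_nz] A_def)
  also have "\<dots> = (\<Sum>u\<in>{u\<in>A. length u = sum_list J \<and> desc u \<subseteq> Des J}. qvar ^ sinv u)"
    by (rule sum.inter_filter[OF finA, symmetric])
  also have "{u\<in>A. length u = sum_list J \<and> desc u \<subseteq> Des J} = Wset I J"
    using lenA sJ unfolding Wset_def A_def coarser_def Des_DC by auto
  finally show ?thesis .
qed

end
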